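(* Let $k\ge1$ and let $\varphi_k,\psi_k,G_{k-1},H_{k-1}$ be as defined below. If $g\in G_{k-1}$ is a product of two squares in $\mathbb{F}_2$ (i.e. $g=a^2b^2$ with $a,b\in\mathbb{F}_2$), then $\varphi_k(g)$ is even. Likewise, if $g\in H_{k-1}$ is a product of two squares in $\mathbb{F}_2$, then $\psi_k(g)$ is even.
   Context: $\mathbb{F}_2$ is the free group on $x,y$. Let $\tilde K$ be the graph with vertex set $\mathbb{Z}^2$ and oriented edges $x^iy^jX$ from $(i,j)$ to $(i+1,j)$ and $x^iy^jY$ from $(i,j)$ to $(i,j+1)$. A $1$-chain is written $\alpha=P_\alpha(x,y)X+Q_\alpha(x,y)Y$ with $P_\alpha,Q_\alpha$ integer Laurent polynomials (coefficient of $x^iy^j$ in $P_\alpha$ = coefficient of edge $x^iy^jX$, similarly for $Q_\alpha$). For $g\in[\mathbb{F}_2,\mathbb{F}_2]$ written as a word in $x^{\pm1},y^{\pm1}$, the cycle $\alpha_g$ is the $1$-cycle traced by the lattice path from $(0,0)$ in which $x,x^{-1},y,y^{-1}$ move by $(1,0),(-1,0),(0,1),(0,-1)$ along the corresponding edges, each edge counted with sign $+1$ if traversed in its orientation and $-1$ otherwise; its homology class depends only on $g$. Put $f_g(y)=P_{\alpha_g}(1,y)$ and $g_g(x)=Q_{\alpha_g}(x,1)$. Set $G_0=H_0=[\mathbb{F}_2,\mathbb{F}_2]$ and inductively, for $k\ge1$, $\varphi_k(g)=f_g^{(k)}(1)/k!$ for $g\in G_{k-1}$, $\psi_k(g)=g_g^{(k)}(1)/k!$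 for $g\in H_{k-1}$ (integers), $G_k=\ker\varphi_k$, $H_k=\ker\psi_k$. These $\varphi_k,\psi_k$ are group homomorphisms to $\mathbb{Z}$. *)

theory Defs
  imports "HOL-Analysis.Analysis"
begin

datatype gen = GX | GY

text \<open>A letter is a generator with a sign: (GX, True) = x, (GX, False) = x^-1, etc.
  Elements of F_2 are represented by words (lists of letters) modulo free reduction.\<close>
type_synonym letter = "gen \<times> bool"
type_synonym word = "letter list"

definition inv_letter :: "letter \<Rightarrow> letter" where
  "inv_letter l = (fst l, \<not> snd l)"

definition inv_word :: "word \<Rightarrow> word" where
  "inv_word w = rev (map inv_letter w)"

inductive cancel1 :: "word \<Rightarrow> word \<Rightarrow> bool" where
  "cancel1 (u @ [l, inv_letter l] @ v) (u @ v)"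

definition free_eq :: "word \<Rightarrow> word \<Rightarrow> bool" where
  "free_eq = equivclp cancel1"

definition commutator :: "word \<Rightarrow> word \<Rightarrow> word" where
  "commutator a b = a @ b @ inv_word a @ inv_word b"

definition in_comm :: "word \<Rightarrow> bool" where
  "in_comm w \<longleftrightarrow> (\<exists>cs. free_eq w (concat (map (\<lambda>(a,b). commutator a b) cs)))"

text \<open>Edges: (i, j, GX) is the edge x^i y^j X from (i,j) to (i+1,j);
  (i, j, GY) is the edge x^i y^j Y from (i,j) to (i,j+1).\<close>
type_synonym edge = "int \<times> int \<times> gen"

fun step_edge :: "int \<times> int \<Rightarrow> letter \<Rightarrow> edge \<times> int \<times> (int \<times> int)" where
  "step_edge (i,j) (GX, True)  = ((i, j, GX), 1, (i+1, j))"
| "step_edge (i,j) (GX, False) = ((i-1, j, GX), -1, (i-1, j))"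
| "step_edge (i,j) (GY, True)  = ((i, j, GY), 1, (i, j+1))"
| "step_edge (i,j) (GY, False) = ((i, j-1, GY), -1, (i, j-1))"

fun chain_from :: "int \<times> int \<Rightarrow> word \<Rightarrow> edge \<Rightarrow> int" where
  "chain_from p [] = (\<lambda>e. 0)"
| "chain_from p (l # w) =
     (case step_edge p l of (e, s, q) \<Rightarrow> (\<lambda>e'. (if e' = e then s else 0) + chain_from q w e'))"

fun edges_from :: "int \<times> int \<Rightarrow> word \<Rightarrow> edge list" where
  "edges_from p [] = []"
| "edges_from p (l # w) = (case step_edge p l of (e, s, q) \<Rightarrow> e # edges_from q w)"

definition alpha :: "word \<Rightarrow> edge \<Rightarrow> int" where
  "alpha w = chain_from (0,0) w"

text \<open>The support of alpha w is contained in the (finite) set of traversed edges.\<close>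
definition P_alpha :: "word \<Rightarrow> real \<Rightarrow> real \<Rightarrow> real" where
  "P_alpha w x y = (\<Sum>e\<in>{e \<in> set (edges_from (0,0) w). snd (snd e) = GX}.
      of_int (alpha w e) * x powi (fst e) * y powi (fst (snd e)))"

definition Q_alpha :: "word \<Rightarrow> real \<Rightarrow> real \<Rightarrow> real" where
  "Q_alpha w x y = (\<Sum>e\<in>{e \<in> set (edges_from (0,0) w). snd (snd e) = GY}.
      of_int (alpha w e) * x powi (fst e) * y powi (fst (snd e)))"

definition f_of :: "word \<Rightarrow> real \<Rightarrow> real" where
  "f_of w y = P_alpha w 1 y"

definition g_of :: "word \<Rightarrow> real \<Rightarrow> real" where
  "g_of w x = Q_alpha w x 1"

definition phi :: "nat \<Rightarrow> word \<Rightarrow> real" where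
  "phi k w = (deriv ^^ k) (f_of w) 1 / fact k"

definition psi :: "nat \<Rightarrow> word \<Rightarrow> real" where
  "psi k w = (deriv ^^ k) (g_of w) 1 / fact k"

fun G_set :: "nat \<Rightarrow> word \<Rightarrow> bool" where
  "G_set 0 w = in_comm w"
| "G_set (Suc k) w = (G_set k w \<and> phi (Suc k) w = 0)"

fun H_set :: "nat \<Rightarrow> word \<Rightarrow> bool" where
  "H_set 0 w = in_comm w"
| "H_set (Suc k) w = (H_set k w \<and> psi (Suc k) w = 0)"

end

theory Submission imports Defs "HOL-Computational_Algebra.Formal_Power_Series" begin

fun co :: "gen \<Rightarrow> int \<times> int \<Rightarrow> int" where
  "co GX p = snd p" | "co GY p = fst p"

definition dl :: "letter \<Rightarrow> int \<times> int" where
  "dl l = (case l of (GX,b) \<Rightarrow> (if b then 1 else -1, 0) | (GY,b) \<Rightarrow> (0, if b then 1 else -1))"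

definition mv :: "int \<times> int \<Rightarrow> letter \<Rightarrow> int \<times> int" where
  "mv p l = (fst p + fst (dl l), snd p + snd (dl l))"

fun LX :: "gen \<Rightarrow> int \<times> int \<Rightarrow> word \<Rightarrow> (int \<times> int) list" where
  "LX d p [] = []"
| "LX d p (l # w) = (if fst l = d then [(if snd l then 1 else -1, co d p)] else []) @ LX d (mv p l) w"

definition endp :: "int \<times> int \<Rightarrow> word \<Rightarrow> int \<times> int" where
  "endp p w = foldl mv p w"

definition hv :: "word \<Rightarrow> int \<times> int" where
  "hv w = endp (0,0) w"

definition ev :: "(int \<times> int) list \<Rightarrow> real \<Rightarrow> real" where
  "ev L z = (\<Sum>(c,e)\<leftarrow>L. of_int c * z powi e)"

definition shift :: "int \<Rightarrow> (int \<times> int) list \<Rightarrow> (int \<times> int) list" where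
  "shift s L = map (\<lambda>(c,e). (c, e + s)) L"

definition Tk :: "(int \<times> int) list \<Rightarrow> nat \<Rightarrow> real" where
  "Tk L k = (\<Sum>(c,e)\<leftarrow>L. of_int c * (of_int e gchoose k))"

lemma co_lin: "co d (a + x, b + y) = co d (a, b) + co d (x, y)"
  by (cases d) auto

lemma endp_Cons: "endp p (l # w) = endp (mv p l) w"
  by (simp add: endp_def)

lemma endp_lin: "endp p w = (fst p + fst (hv w), snd p + snd (hv w))"
proof (induction w arbitrary: p)
  case Nil then show ?case by (simp add: hv_def endp_def)
next
  case (Cons l w)
  have "hv (l # w) = endp (mv (0,0) l) w" by (simp add: hv_def endp_Cons)
  then show ?case using Cons.IH[of "mv p l"] Cons.IH[of "mv (0,0) l"]
    by (simp add: endp_Cons mv_def)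
qed

lemma endp_append: "endp p (u @ v) = endp (endp p u) v"
  by (simp add: endp_def)

lemma hv_append: "hv (u @ v) = (fst (hv u) + fst (hv v), snd (hv u) + snd (hv v))"
  by (simp add: hv_def endp_append endp_lin[of "endp (0,0) u"])

lemma LX_append: "LX d p (u @ v) = LX d p u @ LX d (endp p u) v"
  by (induction u arbitrary: p) (auto simp: endp_Cons endp_def)

lemma shift_append: "shift s (A @ B) = shift s A @ shift s B"
  by (simp add: shift_def)

lemma shift_shift: "shift s (shift t L) = shift (t + s) L"
  by (induction L) (auto simp: shift_def)

lemma shift_0: "shift 0 L = L"
  by (induction L) (auto simp: shift_def)

lemma LX_shift: "LX d p w = shift (co d p) (LX d (0,0) w)"
proof (induction w arbitrary: p)
  case Nil then show ?case by (simp add: shift_def)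
next
  case (Cons l w)
  have m: "co d (mv p l) = co d p + co d (mv (0,0) l)"
    unfolding mv_def using co_lin[of d "fst p" "fst (dl l)" "snd p" "snd (dl l)"] by simp
  have z: "co d (0,0) = 0" by (cases d) auto
  show ?case
    using Cons.IH[of "mv p l"] Cons.IH[of "mv (0,0) l"] m z
    by (simp add: shift_append shift_shift, simp add: shift_def algebra_simps)
qed

lemma LX0_append: "LX d (0,0) (u @ v) = LX d (0,0) u @ shift (co d (hv u)) (LX d (0,0) v)"
  by (simp add: LX_append LX_shift[of d "endp (0,0) u"] hv_def)


lemma ev_append: "ev (A @ B) z = ev A z + ev B z"
  by (simp add: ev_def)

lemma Tk_append: "Tk (A @ B) k = Tk A k + Tk B k"
  by (simp add: Tk_def)

lemma Tk_Cons: "Tk ((c,e) # L) k = of_int c * (of_int e gchoose k) + Tk L k"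
  by (simp add: Tk_def)

lemma Tk_shift: "Tk (shift s L) k = (\<Sum>i\<in>{0..k}. (of_int s gchoose i) * Tk L (k - i))"
proof (induction L)
  case Nil then show ?case by (simp add: Tk_def shift_def)
next
  case (Cons a L)
  obtain c e where a: "a = (c,e)" by force
  have sh: "shift s (a # L) = (c, e + s) # shift s L" by (simp add: a shift_def)
  have V: "(of_int e + of_int s gchoose k :: real) = (\<Sum>i\<in>{0..k}. (of_int s gchoose i) * (of_int e gchoose (k - i)))"
    using gbinomial_Vandermonde[of "of_int s :: real" "of_int e" k] by (simp add: add.commute)
  have "Tk (shift s (a # L)) k = of_int c * (of_int (e + s) gchoose k) + Tk (shift s L) k"
    by (simp add: sh Tk_Cons)
  also have "\<dots> = (\<Sum>i\<in>{0..k}. (of_int s gchoose i) * Tk (a # L) (k - i))"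
    by (simp add: Cons.IH a V Tk_Cons sum_distrib_left sum.distrib algebra_simps)
  finally show ?case .
qed

lemma gchoose_int: "(of_int e gchoose k :: real) \<in> \<int>"
proof (cases "e \<ge> 0")
  case True
  then obtain n where "e = int n" by (metis nonneg_eq_int)
  then show ?thesis using binomial_gbinomial[of n k, where 'a=real] by (metis Ints_of_nat of_int_of_nat_eq)
next
  case False
  then obtain n where n: "- e = int n" by (metis neg_0_less_iff_less nonneg_eq_int not_le less_imp_le)
  have "(of_int e gchoose k :: real) = (-1)^k * ((of_nat n + of_nat k - 1) gchoose k)"
    using gbinomial_minus[of "of_nat n :: real" k] n by (metis minus_minus of_int_minus of_int_of_nat_eq)
  also have "(of_nat n + of_nat k - 1 :: real) = of_nat (n + k - 1)"
    using False n by (simp add: of_nat_diff)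
  finally show ?thesis using binomial_gbinomial[of "n + k - 1" k, where 'a=real]
    by (metis Ints_mult Ints_of_nat Ints_power Ints_minus Ints_1)
qed

lemma Tk_int: "Tk L k \<in> \<int>"
proof (induction L)
  case Nil then show ?case by (simp add: Tk_def)
next
  case (Cons a L) then show ?case using gchoose_int
    by (cases a) (simp add: Tk_Cons)
qed

lemma Tk_0: "Tk L 0 = of_int (\<Sum>(c,e)\<leftarrow>L. c)"
  by (induction L) (auto simp: Tk_def)


lemma free_eq_inv:
  assumes "free_eq x y" "\<And>u l v. F (u @ [l, inv_letter l] @ v) = F (u @ v)"
  shows "F x = F y"
proof -
  have h: "\<And>u l v. F (u @ l # inv_letter l # v) = F (u @ v)" using assms(2) by simp
  show ?thesis using assms(1) unfolding free_eq_def
    by (induction rule: equivclp_induct) (auto elim!: cancel1.cases simp: h)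
qed

lemma dl_inv: "dl (inv_letter l) = (- fst (dl l), - snd (dl l))"
  by (cases l, rename_tac a b, case_tac a) (auto simp: dl_def inv_letter_def)

lemma hv_single: "hv [l] = dl l"
  by (simp add: hv_def endp_def mv_def)

lemma hv_Nil: "hv [] = (0,0)"
  by (simp add: hv_def endp_def)

lemma hv_pair: "hv [l, inv_letter l] = (0,0)"
  using hv_append[of "[l]" "[inv_letter l]"] by (simp add: hv_single dl_inv)

lemma hv_cancel: "hv (u @ [l, inv_letter l] @ v) = hv (u @ v)"
proof -
  have "hv ([l, inv_letter l] @ v) = hv v" using hv_append[of "[l, inv_letter l]" v] hv_pair by simp
  then show ?thesis by (simp add: hv_append)
qed

lemma hv_inv_word: "hv (inv_word a) = (- fst (hv a), - snd (hv a))"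
proof (induction a)
  case Nil then show ?case by (simp add: inv_word_def hv_Nil)
next
  case (Cons l a)
  have "inv_word (l # a) = inv_word a @ [inv_letter l]" by (simp add: inv_word_def)
  then show ?case using Cons hv_append[of "[l]" a] hv_append[of "inv_word a" "[inv_letter l]"]
    by (simp add: hv_single dl_inv)
qed

lemma hv_comm: "hv (commutator a b) = (0,0)"
  by (simp add: commutator_def hv_append hv_inv_word)

lemma hv_concat: "hv (concat (map (\<lambda>(a,b). commutator a b) cs)) = (0,0)"
  by (induction cs) (auto simp: hv_Nil hv_append hv_comm)

lemma in_comm_hv: "in_comm g \<Longrightarrow> hv g = (0,0)"
  unfolding in_comm_def using free_eq_inv[of g _ hv] hv_cancel hv_concat by metis

lemma LX_pair: "ev (LX d p [l, inv_letter l]) z = 0"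
  by (cases l, rename_tac a b, case_tac a; cases d) (auto simp: inv_letter_def ev_def mv_def dl_def)

lemma endp_pair: "endp p [l, inv_letter l] = p"
  by (simp add: endp_lin hv_pair)

lemma ev_cancel: "ev (LX d p (u @ [l, inv_letter l] @ v)) = ev (LX d p (u @ v))"
  by (rule ext) (simp add: LX_append ev_append LX_pair endp_append endp_pair del: append.simps LX.simps)

lemma coeff_sum: "(\<Sum>(c,e)\<leftarrow>LX d p w. c) = co (if d = GX then GY else GX) (hv w)"
proof (induction w arbitrary: p)
  case Nil then show ?case by (cases d) (auto simp: hv_Nil)
next
  case (Cons l w)
  have "hv (l # w) = (fst (dl l) + fst (hv w), snd (dl l) + snd (hv w))"
    using hv_append[of "[l]" w] by (simp add: hv_single)
  then show ?case using Cons
    by (cases l, rename_tac a b, case_tac a; cases d) (auto simp: dl_def)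
qed


definition pf :: "int \<Rightarrow> nat \<Rightarrow> real" where
  "pf e k = (\<Prod>i = 0..<k. of_int e - of_nat i)"

definition DL :: "(int \<times> int) list \<Rightarrow> nat \<Rightarrow> real \<Rightarrow> real" where
  "DL L k z = (\<Sum>(c,e)\<leftarrow>L. of_int c * pf e k * z powi (e - int k))"

lemma DL_Cons: "DL ((c,e) # L) k = (\<lambda>z. of_int c * pf e k * z powi (e - int k) + DL L k z)"
  by (auto simp: DL_def)

lemma pf_Suc: "pf e (Suc k) = pf e k * (of_int e - of_nat k)"
  by (simp add: pf_def)

lemma DL_deriv: "z \<noteq> 0 \<Longrightarrow> (DL L k has_field_derivative DL L (Suc k) z) (at z)"
proof (induction L)
  case Nil
  have "DL [] k = (\<lambda>_. 0)" by (auto simp: DL_def)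
  then show ?case by (simp add: DL_def)
next
  case (Cons a L)
  obtain c e where a: "a = (c,e)" by force
  have p: "((\<lambda>z. z powi (e - int k)) has_field_derivative
      of_int (e - int k) * z powi (e - int k - 1) * 1) (at z)"
    by (rule DERIV_power_int[OF DERIV_ident]) (use Cons.prems in simp)
  have "((\<lambda>z. of_int c * pf e k * z powi (e - int k)) has_field_derivative
      of_int c * pf e k * (of_int (e - int k) * z powi (e - int k - 1) * 1)) (at z)"
    using DERIV_cmult[OF p] by simp
  moreover have "of_int c * pf e k * (of_int (e - int k) * z powi (e - int k - 1) * 1)
      = of_int c * pf e (Suc k) * z powi (e - int (Suc k))"
    by (simp add: pf_Suc algebra_simps)
  ultimately have "((\<lambda>z. of_int c * pf e k * z powi (e - int k)) has_field_derivative
      of_int c * pf e (Suc k) * z powi (e - int (Suc k))) (at z)" by (rule back_subst)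
  from DERIV_add[OF this Cons.IH[OF Cons.prems]] show ?case
    by (simp add: a DL_Cons)
qed

lemma deriv_k:
  assumes "\<forall>z>0. f z = ev L z"
  shows "\<forall>z>0. (deriv ^^ k) f z = DL L k z"
proof (induction k)
  case 0 then show ?case using assms by (simp add: DL_def ev_def pf_def)
next
  case (Suc k)
  show ?case
  proof (intro allI impI)
    fix z :: real assume z: "z > 0"
    have "((deriv ^^ k) f has_field_derivative DL L (Suc k) z) (at z)"
      by (rule has_field_derivative_transform_within_open[OF DL_deriv[of z L k], of "{0<..}"])
         (use z Suc in auto)
    then show "(deriv ^^ Suc k) f z = DL L (Suc k) z"
      by (simp add: DERIV_imp_deriv)
  qed
qed

lemma phi_Tk:
  assumes "\<forall>z>0. f z = ev L z"
  shows "(deriv ^^ k) f 1 / fact k = Tk L k"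
proof -
  have "(deriv ^^ k) f 1 = DL L k 1" using deriv_k[OF assms] by simp
  moreover have "DL L k 1 / fact k = Tk L k"
  proof (induction L)
    case Nil then show ?case by (simp add: DL_def Tk_def)
  next
    case (Cons a L) then show ?case
      by (cases a) (simp add: DL_Cons Tk_Cons pf_def gbinomial_prod_rev add_divide_distrib)
  qed
  ultimately show ?thesis by simp
qed


fun mon :: "gen \<Rightarrow> edge \<Rightarrow> real \<Rightarrow> real" where
  "mon GX e z = z powi (fst (snd e))"
| "mon GY e z = z powi (fst e)"

lemma step_facts:
  assumes "step_edge p l = (e, s, q)"
  shows "q = mv p l \<and> snd (snd e) = fst l \<and> s = (if snd l then 1 else -1)
     \<and> mon (fst l) e z = z powi (co (fst l) p)"
  using assms
  by (cases p; cases l, rename_tac i j a b, case_tac a; case_tac b) (auto simp: mv_def dl_def)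

lemma sum_chain:
  assumes "finite S" "set (edges_from p w) \<subseteq> S"
  shows "(\<Sum>e\<in>{e\<in>S. snd (snd e) = d}. of_int (chain_from p w e) * mon d e z) = ev (LX d p w) z"
  using assms(2)
proof (induction w arbitrary: p)
  case Nil then show ?case by (simp add: ev_def)
next
  case (Cons l w)
  obtain e s q where st: "step_edge p l = (e, s, q)" by (metis prod_cases3)
  note sf = step_facts[OF st, of z]
  have ch: "chain_from p (l # w) = (\<lambda>e'. (if e' = e then s else 0) + chain_from q w e')"
    using st by simp
  have ed: "edges_from p (l # w) = e # edges_from q w" using st by simp
  have eS: "e \<in> S" and qS: "set (edges_from q w) \<subseteq> S" using Cons.prems unfolding ed by auto
  have fin: "finite {e\<in>S. snd (snd e) = d}" using assms(1) by simp
  have "(\<Sum>e'\<in>{e\<in>S. snd (snd e) = d}. of_int (chain_from p (l # w) e') * mon d e' z)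
     = (\<Sum>e'\<in>{e\<in>S. snd (snd e) = d}. (if e' = e then of_int s * mon d e z else 0))
       + (\<Sum>e'\<in>{e\<in>S. snd (snd e) = d}. of_int (chain_from q w e') * mon d e' z)"
    unfolding ch sum.distrib[symmetric] by (intro sum.cong) (auto simp: distrib_right)
  also have "\<dots> = (if snd (snd e) = d then of_int s * mon d e z else 0) + ev (LX d q w) z"
    using Cons.IH[OF qS] eS fin by (simp add: sum.delta)
  also have "\<dots> = ev (LX d p (l # w)) z"
    using sf by (auto simp: ev_def)
  finally show ?case .
qed

lemma f_of_ev: "f_of w y = ev (LX GX (0,0) w) y"
proof -
  have "f_of w y = (\<Sum>e\<in>{e \<in> set (edges_from (0,0) w). snd (snd e) = GX}.
      of_int (alpha w e) * mon GX e y)"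
    by (simp add: f_of_def P_alpha_def)
  then show ?thesis using sum_chain[of "set (edges_from (0,0) w)" "(0,0)" w GX y]
    by (simp add: alpha_def)
qed

lemma g_of_ev: "g_of w x = ev (LX GY (0,0) w) x"
proof -
  have "g_of w x = (\<Sum>e\<in>{e \<in> set (edges_from (0,0) w). snd (snd e) = GY}.
      of_int (alpha w e) * mon GY e x)"
    by (simp add: g_of_def Q_alpha_def)
  then show ?thesis using sum_chain[of "set (edges_from (0,0) w)" "(0,0)" w GY x]
    by (simp add: alpha_def)
qed


lemma main_gen:
  fixes Phi :: "nat \<Rightarrow> real"
  assumes free: "free_eq g (a @ a @ b @ b)" and hg: "hv g = (0,0)"
    and Phi: "\<And>i. Phi i = Tk (LX d (0,0) (a @ a @ b @ b)) i"
    and zero: "\<And>i. i < k \<Longrightarrow> Phi i = 0"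
  shows "\<exists>m::int. Phi k = 2 * of_int m"
proof -
  define s where "s = co d (hv a)"
  define t where "t = co d (hv b)"
  define La where "La = LX d (0,0) a"
  define Lb where "Lb = LX d (0,0) b"
  have "hv (a @ a @ b @ b) = hv g" using free_eq_inv[OF free, of hv] hv_cancel by metis
  then have "hv (a @ a @ b @ b) = (0,0)" using hg by simp
  then have st: "t = - s" unfolding s_def t_def
    by (cases d) (auto simp: hv_append)
  define F where "F = La @ shift s Lb"
  have L: "LX d (0,0) (a @ a @ b @ b) = La @ shift s (La @ shift s (Lb @ shift t Lb))"
    by (simp only: LX0_append La_def Lb_def s_def t_def)
  have TF: "Phi i = Tk F i + Tk (shift s F) i" for i
    by (simp add: Phi L F_def Tk_append shift_append shift_shift st)
  define R where "R i = (\<Sum>m\<in>{1..i}. (of_int s gchoose m) * Tk F (i - m))" for i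
  have PR: "Phi i = 2 * Tk F i + R i" for i
  proof -
    have "Tk (shift s F) i = Tk F i + R i"
      unfolding Tk_shift R_def by (simp add: sum.atLeast_Suc_atMost)
    then show ?thesis using TF[of i] by simp
  qed
  have Fz: "\<forall>i<k. Tk F i = 0"
  proof (intro allI impI)
    fix i assume "i < k"
    then show "Tk F i = 0"
    proof (induction i rule: less_induct)
      case (less i)
      have "R i = 0" unfolding R_def using less by (intro sum.neutral) auto
      then show ?case using PR[of i] zero[OF less.prems] by simp
    qed
  qed
  have "R k = 0" unfolding R_def using Fz by (intro sum.neutral) auto
  then have "Phi k = 2 * Tk F k" using PR[of k] by simp
  moreover obtain m where "Tk F k = of_int m" using Tk_int[of F k] by (metis Ints_cases)
  ultimately show ?thesis by auto
qed


lemma G_comm: "G_set n g \<Longrightarrow> in_comm g"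
  by (induction n) auto

lemma H_comm: "H_set n g \<Longrightarrow> in_comm g"
  by (induction n) auto

lemma G_zero: "G_set n g \<Longrightarrow> 1 \<le> i \<Longrightarrow> i \<le> n \<Longrightarrow> phi i g = 0"
  by (induction n) (auto simp: le_Suc_eq)

lemma H_zero: "H_set n g \<Longrightarrow> 1 \<le> i \<Longrightarrow> i \<le> n \<Longrightarrow> psi i g = 0"
  by (induction n) (auto simp: le_Suc_eq)

lemma ev_free: "free_eq g w \<Longrightarrow> ev (LX d (0,0) g) = ev (LX d (0,0) w)"
  using free_eq_inv[of g w "\<lambda>w. ev (LX d (0,0) w)"] ev_cancel by blast

theorem lemma3p4:
  fixes k :: nat
  assumes "k \<ge> 1"
  shows "(\<forall>g a b :: word. G_set (k - 1) g \<and> free_eq g (a @ a @ b @ b)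
            \<longrightarrow> (\<exists>m::int. phi k g = 2 * of_int m))
       \<and> (\<forall>g a b :: word. H_set (k - 1) g \<and> free_eq g (a @ a @ b @ b)
            \<longrightarrow> (\<exists>m::int. psi k g = 2 * of_int m))"
proof (intro conjI allI impI; elim conjE)
  fix g a b :: word
  assume G: "G_set (k - 1) g" and fr: "free_eq g (a @ a @ b @ b)"
  have hg: "hv g = (0,0)" using in_comm_hv G_comm G by blast
  have P: "phi i g = Tk (LX GX (0,0) (a @ a @ b @ b)) i" for i
    unfolding phi_def by (rule phi_Tk) (simp add: f_of_ev ev_free[OF fr])
  have P0: "phi 0 g = 0"
  proof -
    have "phi 0 g = Tk (LX GX (0,0) g) 0"
      unfolding phi_def by (rule phi_Tk) (simp add: f_of_ev)
    then show ?thesis by (simp add: Tk_0 coeff_sum hg)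
  qed
  have Z: "phi i g = 0" if "i < k" for i
    using G_zero[OF G, of i] P0 that by (cases i) auto
  show "\<exists>m::int. phi k g = 2 * of_int m"
    by (rule main_gen[OF fr hg P Z])
next
  fix g a b :: word
  assume H: "H_set (k - 1) g" and fr: "free_eq g (a @ a @ b @ b)"
  have hg: "hv g = (0,0)" using in_comm_hv H_comm H by blast
  have P: "psi i g = Tk (LX GY (0,0) (a @ a @ b @ b)) i" for i
    unfolding psi_def by (rule phi_Tk) (simp add: g_of_ev ev_free[OF fr])
  have P0: "psi 0 g = 0"
  proof -
    have "psi 0 g = Tk (LX GY (0,0) g) 0"
      unfolding psi_def by (rule phi_Tk) (simp add: g_of_ev)
    then show ?thesis by (simp add: Tk_0 coeff_sum hg)
  qed
  have Z: "psi i g = 0" if "i < k" for i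
    using H_zero[OF H, of i] P0 that by (cases i) auto
  show "\<exists>m::int. psi k g = 2 * of_int m"
    by (rule main_gen[OF fr hg P Z])
qed

end
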